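(* Let $I\subset\mathbb R$ be an interval and $f:I\to\mathbb R$ be $\mathcal G$-convex. Let $s$ be an interior point of $I$ at which $f$ is twice differentiable. Then $f(s)>0$ and $$f''(s)\ \ge\ \frac{1-f'(s)^2}{f(s)}.$$
   Context: $\mathcal G:=\{t\mapsto\sqrt{(t-t_0)^2+h^2}:\ t_0\in\mathbb R,\ h\ge0\}$. A function $f:I\to\mathbb R$ on an interval $I$ is $\mathcal G$-convex if for every $t_0\in I$ there is $g\in\mathcal G$ with $g(t_0)=f(t_0)$ and $g(u)\le f(u)$ for all $u\in I$. *)

theory Defs
  imports "HOL-Analysis.Analysis"
begin

definition G_fun :: "real \<Rightarrow> real \<Rightarrow> real \<Rightarrow> real" where
  "G_fun t0 h = (\<lambda>t. sqrt ((t - t0)\<^sup>2 + h\<^sup>2))"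

definition G_family :: "(real \<Rightarrow> real) set" where
  "G_family = {G_fun t0 h | t0 h. h \<ge> 0}"

definition G_convex :: "real set \<Rightarrow> (real \<Rightarrow> real) \<Rightarrow> bool" where
  "G_convex I f \<longleftrightarrow>
     (\<forall>t0\<in>I. \<exists>g\<in>G_family. g t0 = f t0 \<and> (\<forall>u\<in>I. g u \<le> f u))"

end

theory Submission
  imports Defs
begin

lemma aux1: "(G::real) > 0 \<Longrightarrow> (1 - (a/G)\<^sup>2)/G = (G\<^sup>2 - a\<^sup>2)/G^3"
  by (simp add: field_simps power2_eq_square power3_eq_cube)
lemma aux2: "(G::real) > 0 \<Longrightarrow> (1*G - a/G*a)/G^Suc (Suc 0) = (G\<^sup>2 - a\<^sup>2)/G^3"
  by (simp add: field_simps power2_eq_square power3_eq_cube)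

lemma inv_aux: "inverse (x::real) / 2 * (2*a) = a / x"
  by (simp add: field_simps)

lemma gder_gen: assumes "(t - t0)\<^sup>2 + h\<^sup>2 > (0::real)"
  shows "((\<lambda>t. sqrt ((t - t0)\<^sup>2 + h\<^sup>2)) has_real_derivative (t - t0) / sqrt ((t - t0)\<^sup>2 + h\<^sup>2)) (at t)"
proof -
  have q: "((\<lambda>t. (t-t0)\<^sup>2 + h\<^sup>2) has_real_derivative 2*(t-t0)) (at t)"
    by (auto intro!: derivative_eq_intros)
  have "((\<lambda>t. sqrt ((t - t0)\<^sup>2 + h\<^sup>2)) has_real_derivative inverse (sqrt ((t - t0)\<^sup>2 + h\<^sup>2)) / 2 * (2*(t-t0))) (at t)"
    by (rule DERIV_chain2[OF DERIV_real_sqrt[OF assms] q])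
  thus ?thesis unfolding inv_aux .
qed

lemma second_order_min:
  fixes \<phi> \<phi>' :: "real \<Rightarrow> real" and s d :: real
  assumes der: "\<forall>\<^sub>F x in nhds s. (\<phi> has_real_derivative \<phi>' x) (at x)"
    and der2: "(\<phi>' has_real_derivative d) (at s)"
    and z: "\<phi>' s = 0"
    and mn: "e > 0" "\<And>y. \<bar>y - s\<bar> < e \<Longrightarrow> \<phi> s \<le> \<phi> y"
  shows "d \<ge> 0"
proof (rule ccontr)
  assume "\<not> d \<ge> 0"
  hence dneg: "d < 0" by simp
  have "((\<lambda>y. (\<phi>' y - \<phi>' s) / (y - s)) \<longlongrightarrow> d) (at s)"
    using der2 unfolding has_field_derivative_iff .
  hence "((\<lambda>y. (\<phi>' y - \<phi>' s) / (y - s)) \<longlongrightarrow> d) (at_right s)"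
    by (rule tendsto_mono[OF at_le[OF subset_UNIV]])
  hence "\<forall>\<^sub>F y in at_right s. (\<phi>' y - \<phi>' s) / (y - s) < 0"
    using order_tendstoD(2)[OF _ dneg] by blast
  then obtain b where b: "b > s" "\<And>y. y > s \<Longrightarrow> y < b \<Longrightarrow> (\<phi>' y - \<phi>' s) / (y - s) < 0"
    unfolding eventually_at_right_field by auto
  have neg: "\<phi>' y < 0" if "y > s" "y < b" for y
    using b(2)[OF that] that z by (simp add: divide_less_0_iff)
  obtain d0 where d0: "d0 > 0" "\<And>y. dist y s < d0 \<Longrightarrow> (\<phi> has_real_derivative \<phi>' y) (at y)"
    using der unfolding eventually_nhds_metric by blast
  define x where "x = s + min (min (b - s) d0) e / 2"
  have x: "s < x" "x < b" "x - s < d0" "x - s < e"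
  proof -
    have m: "min (min (b - s) d0) e > 0" using b d0 mn by simp
    have m1: "min (min (b - s) d0) e \<le> b - s" "min (min (b - s) d0) e \<le> d0" "min (min (b - s) d0) e \<le> e"
      by linarith+
    show "s < x" "x < b" "x - s < d0" "x - s < e" unfolding x_def using m m1 by linarith+
  qed
  have dd: "(\<phi> has_real_derivative \<phi>' y) (at y)" if "s \<le> y" "y \<le> x" for y
  proof (rule d0(2))
    show "dist y s < d0" using that x(3) by (simp add: dist_real_def)
  qed
  from MVT2[OF x(1) dd] obtain z where zz: "z > s" "z < x" "\<phi> x - \<phi> s = (x - s) * \<phi>' z"
    by blast
  have "\<phi>' z < 0" using neg zz x by auto
  hence "(x - s) * \<phi>' z < 0" using x(1) by (simp add: mult_pos_neg)
  hence "\<phi> x < \<phi> s" using zz(3) by linarith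
  moreover have "\<phi> s \<le> \<phi> x" using mn(2)[of x] x by simp
  ultimately show False by simp
qed

theorem mainTheorem17:
  fixes I :: "real set" and f f' :: "real \<Rightarrow> real" and s f2 :: real
  assumes "is_interval I"
    and "G_convex I f"
    and "s \<in> interior I"
    and "\<forall>\<^sub>F x in nhds s. (f has_real_derivative f' x) (at x)"
    and "(f' has_real_derivative f2) (at s)"
  shows "f s > 0 \<and> f2 \<ge> (1 - (f' s)\<^sup>2) / f s"
proof -
  have sI: "s \<in> I" using assms(3) interior_subset by blast
  obtain t0 h where h: "h \<ge> 0" and gs: "G_fun t0 h s = f s"
    and gle: "\<And>u. u \<in> I \<Longrightarrow> G_fun t0 h u \<le> f u"
    using assms(2) sI unfolding G_convex_def G_family_def by blast
  obtain e where e: "e > 0" "ball s e \<subseteq> I" using assms(3) mem_interior by blast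
  have inI: "u \<in> I" if "\<bar>u - s\<bar> < e" for u
    using e that by (auto simp: dist_real_def)
  have fd: "(f has_real_derivative f' s) (at s)"
    using assms(4) eventually_nhds_x_imp_x by blast
  define Q where "Q t = (t - t0)\<^sup>2 + h\<^sup>2" for t
  define g where "g t = sqrt (Q t)" for t
  have g_eq: "G_fun t0 h = g" unfolding g_def Q_def G_fun_def by auto
  have fpos: "f s > 0"
  proof (rule ccontr)
    assume "\<not> f s > 0"
    moreover have "g s \<ge> 0" unfolding g_def Q_def by simp
    ultimately have "g s = 0" using gs g_eq by simp
    hence "Q s = 0" unfolding g_def by simp
    hence st: "s = t0" "h = 0" unfolding Q_def using h
      by (auto simp: add_nonneg_eq_0_iff)
    hence gabs: "g u = \<bar>u - s\<bar>" for u unfolding g_def Q_def by simp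
    have fs0: "f s = 0" using gs g_eq gabs by simp
    have d1: "((\<lambda>u. f u - (u - s)) has_real_derivative f' s - 1) (at s)"
      by (auto intro!: derivative_eq_intros fd)
    have d2: "((\<lambda>u. f u + (u - s)) has_real_derivative f' s + 1) (at s)"
      by (auto intro!: derivative_eq_intros fd)
    have m1: "f s - (s - s) \<le> f u - (u - s)" if "\<bar>s - u\<bar> < e" for u
    proof -
      have uu: "\<bar>u - s\<bar> < e" using that by (simp add: abs_minus_commute)
      have "g u \<le> f u" using gle[OF inI[OF uu]] g_eq by simp
      hence "\<bar>u - s\<bar> \<le> f u" using gabs by simp
      thus ?thesis using fs0 by linarith
    qed
    have m2: "f s + (s - s) \<le> f u + (u - s)" if "\<bar>s - u\<bar> < e" for u
    proof -
      have uu: "\<bar>u - s\<bar> < e" using that by (simp add: abs_minus_commute)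
      have "g u \<le> f u" using gle[OF inI[OF uu]] g_eq by simp
      hence "\<bar>u - s\<bar> \<le> f u" using gabs by simp
      thus ?thesis using fs0 by linarith
    qed
    have "f' s - 1 = 0" using DERIV_local_min[OF d1 e(1)] m1 by blast
    moreover have "f' s + 1 = 0" using DERIV_local_min[OF d2 e(1)] m2 by blast
    ultimately show False by simp
  qed
  have Qs: "Q s > 0"
  proof -
    have "sqrt (Q s) > 0" using fpos gs g_eq unfolding g_def by simp
    thus ?thesis by simp
  qed
  have Gpos: "g s > 0" using fpos gs g_eq by simp
  have gsq: "(g s)\<^sup>2 = Q s" unfolding g_def using Qs by simp
  have "\<forall>\<^sub>F t in at s. Q t > 0"
  proof -
    have "(Q \<longlongrightarrow> Q s) (at s)" unfolding Q_def by (intro tendsto_intros)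
    thus ?thesis using Qs order_tendstoD(1) by blast
  qed
  hence evQ: "\<forall>\<^sub>F t in nhds s. Q t > 0" using Qs eventually_nhds_conv_at by blast
  have gder: "(g has_real_derivative (t - t0) / g t) (at t)" if "Q t > 0" for t
    unfolding g_def[abs_def] Q_def using gder_gen[OF that[unfolded Q_def]] .
  define \<phi> where "\<phi> t = f t - g t" for t
  define \<phi>' where "\<phi>' t = f' t - (t - t0) / g t" for t
  have phider: "\<forall>\<^sub>F t in nhds s. (\<phi> has_real_derivative \<phi>' t) (at t)"
    using evQ assms(4)
  proof eventually_elim
    case (elim t)
    show ?case unfolding \<phi>_def[abs_def] \<phi>'_def
      using elim gder[of t] by (auto intro!: derivative_eq_intros)
  qed
  have mn: "\<phi> s \<le> \<phi> y" if "\<bar>y - s\<bar> < e" for y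
    using gle[OF inI[OF that]] gs g_eq unfolding \<phi>_def by simp
  have "\<phi>' s = 0"
    using DERIV_local_min[OF eventually_nhds_x_imp_x[OF phider] e(1)] mn
    by (simp add: abs_minus_commute)
  hence fs': "f' s = (s - t0) / g s" unfolding \<phi>'_def by simp
  have e1: "(g s)\<^sup>2 - (s - t0)\<^sup>2 = h\<^sup>2" using gsq unfolding Q_def by simp
  have g2der: "((\<lambda>t. (t - t0) / g t) has_real_derivative h\<^sup>2 / (g s)^3) (at s)"
  proof -
    have A: "((\<lambda>t. t - t0) has_real_derivative 1) (at s)" by (auto intro!: derivative_eq_intros)
    have gs0: "g s \<noteq> 0" using Gpos by linarith
    have D: "((\<lambda>t. (t - t0) / g t) has_real_derivative (1 * g s - (s - t0) / g s * (s - t0)) / (g s ^ Suc (Suc 0))) (at s)"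
      by (rule DERIV_quotient[OF A gder[OF Qs] gs0])
    have E: "(1 * g s - (s - t0) / g s * (s - t0)) / (g s ^ Suc (Suc 0)) = h\<^sup>2 / (g s)^3"
      by (rule aux2[OF Gpos, of "s - t0", unfolded e1])
    show ?thesis using D unfolding E .
  qed
  have "(\<phi>' has_real_derivative f2 - h\<^sup>2 / (g s)^3) (at s)"
    unfolding \<phi>'_def[abs_def] by (intro DERIV_diff assms(5) g2der)
  from second_order_min[OF phider this \<open>\<phi>' s = 0\<close> e(1) mn]
  have "f2 \<ge> h\<^sup>2 / (g s)^3" by simp
  moreover have "(1 - (f' s)\<^sup>2) / f s = h\<^sup>2 / (g s)^3"
  proof -
    have fg: "f s = g s" using gs g_eq by simp
    show ?thesis unfolding fs' fg by (rule aux1[OF Gpos, of "s - t0", unfolded e1])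
  qed
  ultimately show ?thesis using fpos by (intro conjI) linarith+
qed

end
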